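(* Consider the linear system $x_{t+1}=Ax_t+Bu_t$ in closed loop with the Learning Model Predictive Control (LMPC) policy with prediction horizon $N$ described in the context, and let the stage-cost assumption and the initial-trajectory assumption described in the context hold. If two consecutive iterations $j-1$ and $j$ ($j\ge1$) attain the same cost, $J^{j-1}_{0\to\infty}(x_S)=J^j_{0\to\infty}(x_S)$, then the associated closed-loop state trajectories coincide: $\boldsymbol{x}^{j-1}=\boldsymbol{x}^j$.
   Context: System: $x_{t+1}=Ax_t+Bu_t$, $x_t\in\mathbb{R}^n$, $u_t\in\mathbb{R}^d$, with polyhedral constraints $x_t\in\mathcal{X}=\{x: F_x x\le b_x\}$, $u_t\in\mathcal{U}=\{u:F_u u\le b_u\}$, both containing the origin in their interior. Stage-cost assumption: $h(x,u)=x^\top Qx+u^\top Ru$ with $Q\succeq 0$, $R\succ 0$. A fixed initial condition $x_S$ is given. Stored data: at each iteration $j=0,1,2,\ldots$ a closed-loop trajectory $\boldsymbol{x}^j=[x^j_0,x^j_1,\ldots]$, $\boldsymbol{u}^j=[u^j_0,u^j_1,\ldots]$ with $x_0^j=x_S$ is stored. Initial-trajectory assumption: $\boldsymbol{x}^0,\boldsymbol{u}^0$ satisfy $x^0_{t+1}=Ax^0_t+Bu^0_t$, $x^0_t\in\mathcal{X}$, $u^0_t\in\mathcal{U}$ for all $t\ge0$, $x^0_t\to0$, $u^0_t\to0$, and $\sum_{t=0}^\infty h(x_t^0,u_t^0)<\infty$. Cost-to-go of stored states: $J^i_{k\to\infty}(x^i_k)=\sum_{l=k}^\infty h(x^i_l,u^i_l)$.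 Convex safe set $\mathcal{CS}^j$ = the smallest closed convex set containing $\{x^i_t: 0\le i\le j,\ t\ge 0\}$. $V$-function: $V^j(x)=\min_{\gamma^i_k\ge0}\sum_{i=0}^j\sum_{k=0}^\infty\gamma^i_k J^i_{k\to\infty}(x^i_k)$ subject to $\sum_{i,k}\gamma^i_k x^i_k=x$, $\sum_{i,k}\gamma^i_k=1$. LMPC policy at iteration $j\ge1$: at time $t$, with current state $x^j_t$, solve $J^{\mathrm{LMPC},j}_{t\to t+N}(x^j_t)=\min_{u_{t|t},\ldots,u_{t+N-1|t}}\sum_{k=t}^{t+N-1}h(x_{k|t},u_{k|t})+V^{j-1}(x_{t+N|t})$ subject to $x_{k+1|t}=Ax_{k|t}+Bu_{k|t}$, $x_{k|t}\in\mathcal{X}$, $u_{k|t}\in\mathcal{U}$ for $k=t,\ldots,t+N-1$, $x_{t+N|t}\in\mathcal{CS}^{j-1}$, $x_{t|t}=x^j_t$; apply the first optimal input $u^j_t=u^{j,*}_{t|t}$, so $x^j_{t+1}=Ax^j_t+Bu^j_t$, and repeat at $t+1$ (receding horizon). The iteration cost is $J^j_{0\to\infty}(x_S)=\sum_{t=0}^\infty h(x^j_t,u^j_t)$ (with $J^0_{0\to\infty}(x_S)=\sum_t h(x^0_t,u^0_t)$). *)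

theory Defs
  imports "HOL-Analysis.Analysis"
begin

definition polyhedron :: "real^'n^'m \<Rightarrow> real^'m \<Rightarrow> (real^'n) set" where
  "polyhedron F b = {z. \<forall>i. (F *v z) $ i \<le> b $ i}"

definition stage_cost :: "real^'n^'n \<Rightarrow> real^'d^'d \<Rightarrow> real^'n \<Rightarrow> real^'d \<Rightarrow> real" where
  "stage_cost Q R x u = x \<bullet> (Q *v x) + u \<bullet> (R *v u)"

definition psd :: "real^'n^'n \<Rightarrow> bool" where
  "psd M \<longleftrightarrow> transpose M = M \<and> (\<forall>x. 0 \<le> x \<bullet> (M *v x))"

definition pd :: "real^'n^'n \<Rightarrow> bool" where
  "pd M \<longleftrightarrow> transpose M = M \<and> (\<forall>x. x \<noteq> 0 \<longrightarrow> 0 < x \<bullet> (M *v x))"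

definition iter_cost ::
  "real^'n^'n \<Rightarrow> real^'d^'d \<Rightarrow> (nat \<Rightarrow> nat \<Rightarrow> real^'n) \<Rightarrow> (nat \<Rightarrow> nat \<Rightarrow> real^'d) \<Rightarrow> nat \<Rightarrow> ennreal" where
  "iter_cost Q R xs us i = (\<Sum>t. ennreal (stage_cost Q R (xs i t) (us i t)))"

definition cost_to_go ::
  "real^'n^'n \<Rightarrow> real^'d^'d \<Rightarrow> (nat \<Rightarrow> nat \<Rightarrow> real^'n) \<Rightarrow> (nat \<Rightarrow> nat \<Rightarrow> real^'d) \<Rightarrow> nat \<Rightarrow> nat \<Rightarrow> ennreal" where
  "cost_to_go Q R xs us i k = (\<Sum>l. ennreal (stage_cost Q R (xs i (l + k)) (us i (l + k))))"

definition safe_set :: "(nat \<Rightarrow> nat \<Rightarrow> real^'n) \<Rightarrow> nat \<Rightarrow> (real^'n) set" where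
  "safe_set xs j = closure (convex hull {xs i t | i t. i \<le> j})"

text \<open>V-function V^j(x) (infimum over admissible multipliers; +inf if none).\<close>
definition Vfun ::
  "real^'n^'n \<Rightarrow> real^'d^'d \<Rightarrow> (nat \<Rightarrow> nat \<Rightarrow> real^'n) \<Rightarrow> (nat \<Rightarrow> nat \<Rightarrow> real^'d) \<Rightarrow> nat \<Rightarrow> real^'n \<Rightarrow> ennreal" where
  "Vfun Q R xs us j x =
     (INF \<gamma> \<in> {\<gamma> :: nat \<Rightarrow> nat \<Rightarrow> real.
                 (\<forall>i k. 0 \<le> \<gamma> i k)
               \<and> ((\<lambda>(i,k). \<gamma> i k) has_sum 1) ({..j} \<times> UNIV)
               \<and> ((\<lambda>(i,k). \<gamma> i k *\<^sub>R xs i k) has_sum x) ({..j} \<times> UNIV)}.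
        (\<Sum>\<^sub>\<infinity>(i,k)\<in>{..j} \<times> UNIV. ennreal (\<gamma> i k) * cost_to_go Q R xs us i k))"

fun pred_state :: "real^'n^'n \<Rightarrow> real^'d^'n \<Rightarrow> real^'n \<Rightarrow> (nat \<Rightarrow> real^'d) \<Rightarrow> nat \<Rightarrow> real^'n" where
  "pred_state A B x v 0 = x"
| "pred_state A B x v (Suc k) = A *v pred_state A B x v k + B *v v k"

text \<open>Feasibility of input sequence v (entries v 0 .. v (N-1) used) for the LMPC problem at x, iteration j.\<close>
definition lmpc_feasible ::
  "real^'n^'n \<Rightarrow> real^'d^'n \<Rightarrow> (real^'n) set \<Rightarrow> (real^'d) set \<Rightarrow> nat \<Rightarrow>
   (nat \<Rightarrow> nat \<Rightarrow> real^'n) \<Rightarrow> nat \<Rightarrow> real^'n \<Rightarrow> (nat \<Rightarrow> real^'d) \<Rightarrow> bool" where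
  "lmpc_feasible A B X U N xs j x v \<longleftrightarrow>
     (\<forall>k<N. pred_state A B x v k \<in> X \<and> v k \<in> U)
   \<and> pred_state A B x v N \<in> safe_set xs (j - 1)"

definition lmpc_cost ::
  "real^'n^'n \<Rightarrow> real^'d^'n \<Rightarrow> real^'n^'n \<Rightarrow> real^'d^'d \<Rightarrow> nat \<Rightarrow>
   (nat \<Rightarrow> nat \<Rightarrow> real^'n) \<Rightarrow> (nat \<Rightarrow> nat \<Rightarrow> real^'d) \<Rightarrow> nat \<Rightarrow> real^'n \<Rightarrow> (nat \<Rightarrow> real^'d) \<Rightarrow> ennreal" where
  "lmpc_cost A B Q R N xs us j x v =
     (\<Sum>k<N. ennreal (stage_cost Q R (pred_state A B x v k) (v k)))
     + Vfun Q R xs us (j - 1) (pred_state A B x v N)"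

definition lmpc_optimal ::
  "real^'n^'n \<Rightarrow> real^'d^'n \<Rightarrow> (real^'n) set \<Rightarrow> (real^'d) set \<Rightarrow> real^'n^'n \<Rightarrow> real^'d^'d \<Rightarrow> nat \<Rightarrow>
   (nat \<Rightarrow> nat \<Rightarrow> real^'n) \<Rightarrow> (nat \<Rightarrow> nat \<Rightarrow> real^'d) \<Rightarrow> nat \<Rightarrow> real^'n \<Rightarrow> (nat \<Rightarrow> real^'d) \<Rightarrow> bool" where
  "lmpc_optimal A B X U Q R N xs us j x v \<longleftrightarrow>
     lmpc_feasible A B X U N xs j x v
   \<and> (\<forall>w. lmpc_feasible A B X U N xs j x w \<longrightarrow>
          lmpc_cost A B Q R N xs us j x v \<le> lmpc_cost A B Q R N xs us j x w)"

end

theory Submission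
  imports Defs "HOL-Analysis.Analysis"
begin
lemma psd_sym: "psd M \<Longrightarrow> x \<bullet> (M *v y) = y \<bullet> (M *v x)"
  unfolding psd_def
  by (metis dot_lmul_matrix inner_commute vector_transpose_matrix)

lemma pd_psd: "pd M \<Longrightarrow> psd M"
  unfolding pd_def psd_def by (metis inner_zero_left matrix_vector_mult_0_right order_le_less)

lemma quad_nonneg: "psd M \<Longrightarrow> 0 \<le> x \<bullet> (M *v x)"
  unfolding psd_def by blast

lemma stage_cost_nonneg: "psd Q \<Longrightarrow> pd R \<Longrightarrow> 0 \<le> stage_cost Q R x u"
  unfolding stage_cost_def using quad_nonneg pd_psd by (metis add_nonneg_nonneg)

lemma quad_tangent:
  assumes "psd M"
  shows "x \<bullet> (M *v x) = z \<bullet> (M *v z) + 2 * ((M *v z) \<bullet> (x - z)) + (x - z) \<bullet> (M *v (x - z))"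
  using psd_sym[OF assms, of x z]
  by (simp add: matrix_vector_mult_diff_distrib inner_diff_left inner_diff_right inner_commute algebra_simps)

lemma quad_mid:
  assumes "psd M" and mdef: "m = (1/2) *\<^sub>R (a + b)"
  shows "m \<bullet> (M *v m) =
     (a \<bullet> (M *v a) + b \<bullet> (M *v b)) / 2 - ((a - b) \<bullet> (M *v (a - b))) / 4"
proof -
  have s: "a \<bullet> (M *v b) = b \<bullet> (M *v a)" using psd_sym[OF assms(1)] .
  have Mm: "M *v m = (1/2) *\<^sub>R (M *v (a + b))" unfolding mdef by (simp add: matrix_vector_mult_scaleR)
  have e1: "m \<bullet> (M *v m) = (1/4) * ((a + b) \<bullet> (M *v (a + b)))"
    unfolding Mm by (simp add: mdef)
  have e2: "(a + b) \<bullet> (M *v (a + b)) = a \<bullet> (M *v a) + b \<bullet> (M *v b) + 2 * (a \<bullet> (M *v b))"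
    using s by (simp add: matrix_vector_right_distrib inner_add_left inner_add_right)
  have e3: "(a - b) \<bullet> (M *v (a - b)) = a \<bullet> (M *v a) + b \<bullet> (M *v b) - 2 * (a \<bullet> (M *v b))"
    using s by (simp add: matrix_vector_mult_diff_distrib inner_diff_left inner_diff_right)
  have gen: "\<And>X Y Z P Q S::real. X = 1/4*Y \<Longrightarrow> Y = P+Q+2*S \<Longrightarrow> Z = P+Q-2*S \<Longrightarrow> X = (P+Q)/2 - Z/4"
    by argo
  show ?thesis by (rule gen[OF e1 e2 e3])
qed

lemma pd_coercive:
  assumes "pd (R::real^'d^'d)"
  shows "\<exists>c>0. \<forall>u. c * (norm u)^2 \<le> u \<bullet> (R *v u)"
proof -
  let ?S = "sphere (0::real^'d) 1"
  have cS: "compact ?S" by simp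
  have neS: "?S \<noteq> {}"
  proof -
    obtain u :: "real^'d" where "norm u = 1" using vector_choose_size[of 1] by auto
    then have "u \<in> ?S" by (simp add: dist_norm)
    then show ?thesis by blast
  qed
  have coS: "continuous_on ?S (\<lambda>u. u \<bullet> (R *v u))"
    by (rule continuous_on_inner[OF continuous_on_id linear_continuous_on]) (rule matrix_vector_mul_bounded_linear)
  obtain u0 where u0: "u0 \<in> ?S" "\<And>y. y \<in> ?S \<Longrightarrow> u0 \<bullet> (R *v u0) \<le> y \<bullet> (R *v y)"
    using continuous_attains_inf[OF cS neS coS] by blast
  have "u0 \<noteq> 0" using u0(1) by (metis mem_sphere_0 norm_zero zero_neq_one)
  hence c: "0 < u0 \<bullet> (R *v u0)" using assms unfolding pd_def by blast
  show ?thesis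
  proof (intro exI[of _ "u0 \<bullet> (R *v u0)"] conjI allI c)
    fix u :: "real^'d"
    show "u0 \<bullet> (R *v u0) * (norm u)^2 \<le> u \<bullet> (R *v u)"
    proof (cases "u = 0")
      case True then show ?thesis by simp
    next
      case False
      let ?y = "(1 / norm u) *\<^sub>R u"
      have "?y \<in> ?S" using False by simp
      hence "u0 \<bullet> (R *v u0) \<le> ?y \<bullet> (R *v ?y)" using u0 by blast
      also have "?y \<bullet> (R *v ?y) = (u \<bullet> (R *v u)) / (norm u)^2"
        by (simp add: matrix_vector_mult_scaleR power2_eq_square)
      finally have "u0 \<bullet> (R *v u0) \<le> (u \<bullet> (R *v u)) / (norm u)^2" .
      moreover have "0 < (norm u)^2" using False by simp
      ultimately show ?thesis by (simp add: pos_le_divide_eq)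
    qed
  qed
qed

lemma isCont_ennreal: "isCont ennreal x"
  unfolding isCont_def by (rule tendsto_ennrealI[OF tendsto_ident_at])

lemma ennreal_infsum_real:
  fixes f :: "'a \<Rightarrow> real"
  assumes nn: "\<And>x. x \<in> A \<Longrightarrow> 0 \<le> f x"
    and fin: "infsum (\<lambda>x. ennreal (f x)) A \<noteq> top"
  shows "f summable_on A" "infsum (\<lambda>x. ennreal (f x)) A = ennreal (infsum f A)"
proof -
  let ?T = "infsum (\<lambda>x. ennreal (f x)) A"
  have b: "sum f F \<le> enn2real ?T" if "finite F" "F \<subseteq> A" for F
  proof -
    have "ennreal (sum f F) = sum (\<lambda>x. ennreal (f x)) F"
      using nn that by (subst sum_ennreal) auto
    also have "\<dots> = infsum (\<lambda>x. ennreal (f x)) F" using that by simp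
    also have "\<dots> \<le> ?T"
      by (rule infsum_mono_neutral) (use that in \<open>auto intro: nonneg_summable_on_complete\<close>)
    finally have "ennreal (sum f F) \<le> ?T" .
    hence "enn2real (ennreal (sum f F)) \<le> enn2real ?T"
      using fin by (intro enn2real_mono) (auto simp: top.not_eq_extremum)
    moreover have "0 \<le> sum f F" using nn that by (intro sum_nonneg) auto
    ultimately show ?thesis by simp
  qed
  show sm: "f summable_on A"
    by (rule nonneg_bdd_above_summable_on) (use nn b in \<open>auto simp: bdd_above_def\<close>)
  have "infsum (ennreal \<circ> f) A = ennreal (infsum f A)"
    by (rule infsum_comm_additive_general)
       (use nn sm in \<open>auto simp: sum_ennreal subset_iff intro: isCont_ennreal\<close>)
  then show "infsum (\<lambda>x. ennreal (f x)) A = ennreal (infsum f A)" by (simp add: o_def)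
qed

lemma infsum_ennreal_cmult:
  fixes f :: "'a \<Rightarrow> ennreal"
  assumes "c < top"
  shows "infsum (\<lambda>x. c * f x) A = c * infsum f A"
proof -
  have "infsum ((\<lambda>x. c * x) \<circ> f) A = c * infsum f A"
    by (rule infsum_comm_additive_general)
       (auto simp: sum_distrib_left isCont_def nonneg_summable_on_complete intro!: ennreal_tendsto_cmult[OF assms] tendsto_ident_at)
  then show ?thesis by (simp add: o_def)
qed

lemma infsum_ennreal_add:
  fixes f g :: "'a \<Rightarrow> ennreal"
  shows "infsum (\<lambda>x. f x + g x) A = infsum f A + infsum g A"
  by (rule infsum_add) (simp_all add: nonneg_summable_on_complete)

lemma partial_le_has_sum:
  fixes g :: "'a \<Rightarrow> real"
  assumes "\<And>x. x \<in> I \<Longrightarrow> 0 \<le> g x" "(g has_sum s) I" "finite F" "F \<subseteq> I"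
  shows "sum g F \<le> s"
  by (rule has_sum_mono_neutral[OF has_sum_finite[OF assms(3)] assms(2)]) (use assms in auto)

lemma has_sum_in_closure_hull:
  fixes p :: "'i \<Rightarrow> 'a::real_normed_vector"
  assumes nn: "\<And>x. x \<in> I \<Longrightarrow> 0 \<le> g x"
    and g1: "(g has_sum 1) I"
    and gp: "((\<lambda>x. g x *\<^sub>R p x) has_sum w) I"
    and pS: "\<And>x. x \<in> I \<Longrightarrow> p x \<in> S"
  shows "w \<in> closure (convex hull S)"
proof -
  have "I \<noteq> {}" using g1 by (metis has_sum_empty has_sum_unique zero_neq_one)
  then obtain i0 where i0: "i0 \<in> I" by blast
  let ?G = "\<lambda>F. sum (\<lambda>x. g x *\<^sub>R p x) F + (1 - sum g F) *\<^sub>R p i0"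
  have lim: "(?G \<longlongrightarrow> w + (1 - 1) *\<^sub>R p i0) (finite_subsets_at_top I)"
    using gp g1 unfolding has_sum_def by (intro tendsto_intros)
  have ev: "\<forall>\<^sub>F F in finite_subsets_at_top I. ?G F \<in> closure (convex hull S)"
  proof (rule eventually_finite_subsets_at_top_weakI)
    fix F assume F: "finite F" "F \<subseteq> I"
    let ?s = "sum g F"
    have s0: "0 \<le> ?s" using nn F by (intro sum_nonneg) auto
    have s1: "?s \<le> 1" using partial_le_has_sum[OF nn g1 F] by blast
    have p0: "p i0 \<in> convex hull S" using pS[OF i0] by (simp add: hull_inc)
    have "?G F \<in> convex hull S"
    proof (cases "?s = 0")
      case True
      hence "\<forall>x\<in>F. g x = 0" using F nn by (subst (asm) sum_nonneg_eq_0_iff) auto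
      hence "sum (\<lambda>x. g x *\<^sub>R p x) F = 0" by simp
      then show ?thesis using True p0 by simp
    next
      case False
      hence spos: "0 < ?s" using s0 by simp
      have "sum (\<lambda>x. (g x / ?s) *\<^sub>R p x) F \<in> convex hull S"
      proof (rule convex_sum[OF F(1) convex_convex_hull])
        show "(\<Sum>i\<in>F. g i / ?s) = 1" using spos by (simp add: sum_divide_distrib[symmetric])
        show "\<And>i. i \<in> F \<Longrightarrow> 0 \<le> g i / ?s" using nn F spos by auto
        show "\<And>i. i \<in> F \<Longrightarrow> p i \<in> convex hull S" using pS F by (auto simp: hull_inc)
      qed
      hence "?s *\<^sub>R sum (\<lambda>x. (g x / ?s) *\<^sub>R p x) F + (1 - ?s) *\<^sub>R p i0 \<in> convex hull S"
        using p0 s0 s1 by (intro convexD[OF convex_convex_hull]) auto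
      moreover have "?s *\<^sub>R sum (\<lambda>x. (g x / ?s) *\<^sub>R p x) F = sum (\<lambda>x. g x *\<^sub>R p x) F"
        using spos by (simp add: scaleR_sum_right)
      ultimately show ?thesis by simp
    qed
    then show "?G F \<in> closure (convex hull S)" using closure_subset by blast
  qed
  show ?thesis
    using Lim_in_closed_set[OF closed_closure ev finite_subsets_at_top_neq_bot] lim by simp
qed

lemma pred_cong: "(\<And>k'. k' < k \<Longrightarrow> v k' = w k') \<Longrightarrow> pred_state A B x v k = pred_state A B x w k"
  by (induction k) auto

lemma pred_shift: "pred_state A B x v (Suc k) = pred_state A B (A *v x + B *v v 0) (\<lambda>k. v (Suc k)) k"
  by (induction k) auto

lemma pred_mid: "pred_state A B x (\<lambda>k. (1/2) *\<^sub>R (v k + w k)) k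
   = (1/2) *\<^sub>R (pred_state A B x v k + pred_state A B x w k)"
proof (induction k)
  case 0 then show ?case by (simp add: scaleR_2[symmetric] del: scaleR_2)
next
  case (Suc k) then show ?case by (simp add: algebra_simps)
qed

lemma pred_traj:
  assumes "\<And>t. xs (Suc t) = A *v xs t + B *v us t"
  shows "pred_state A B (xs t) (\<lambda>k. us (t + k)) k = xs (t + k)"
  by (induction k) (auto simp: assms)

lemma polyhedron_convex: "convex (polyhedron F b)"
  unfolding polyhedron_def convex_def
proof (clarify)
  fix x y :: "real^'a" and u v :: real and i
  assume h: "\<forall>i. (F *v x) $ i \<le> b $ i" "\<forall>i. (F *v y) $ i \<le> b $ i" "0 \<le> u" "0 \<le> v" "u + v = 1"
  have "(F *v (u *\<^sub>R x + v *\<^sub>R y)) $ i = u * (F *v x) $ i + v * (F *v y) $ i"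
    by (simp add: matrix_vector_right_distrib matrix_vector_mult_scaleR)
  also have "\<dots> \<le> u * b $ i + v * b $ i"
    using h by (intro add_mono mult_left_mono) auto
  also have "\<dots> = b $ i" using h(5) by (metis distrib_right mult_1)
  finally show "(F *v (u *\<^sub>R x + v *\<^sub>R y)) $ i \<le> b $ i" .
qed

lemma polyhedron_closed: "closed (polyhedron (F::real^'n^'m) b)"
proof -
  have "polyhedron F b = (\<Inter>i. {z. (F *v z) $ i \<le> b $ i})" unfolding polyhedron_def by auto
  moreover have "closed {z. (F *v z) $ i \<le> b $ i}" for i
    by (intro closed_Collect_le continuous_intros)
  ultimately show ?thesis by auto
qed

lemma safe_set_convex: "convex (safe_set xs m)"
  unfolding safe_set_def by (simp add: convex_closure)

lemma safe_set_mem: "i \<le> m \<Longrightarrow> xs i t \<in> safe_set xs m"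
  unfolding safe_set_def by (rule subsetD[OF closure_subset]) (auto intro: hull_inc)

lemma safe_set_sub:
  assumes "closed X" "convex X" "\<And>i t. i \<le> m \<Longrightarrow> xs i t \<in> X"
  shows "safe_set xs m \<subseteq> X"
  unfolding safe_set_def using assms
  by (intro closure_minimal hull_minimal) auto

definition vfeas :: "(nat \<Rightarrow> nat \<Rightarrow> real^'n) \<Rightarrow> nat \<Rightarrow> real^'n \<Rightarrow> (nat \<Rightarrow> nat \<Rightarrow> real) \<Rightarrow> bool" where
  "vfeas xs m x \<gamma> \<longleftrightarrow> (\<forall>i k. 0 \<le> \<gamma> i k)
               \<and> ((\<lambda>(i,k). \<gamma> i k) has_sum 1) ({..m} \<times> UNIV)
               \<and> ((\<lambda>(i,k). \<gamma> i k *\<^sub>R xs i k) has_sum x) ({..m} \<times> UNIV)"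

definition vcost where
  "vcost Q R xs us m \<gamma> = (\<Sum>\<^sub>\<infinity>(i,k)\<in>{..m} \<times> UNIV. ennreal (\<gamma> i k) * cost_to_go Q R xs us i k)"

lemma Vfun_alt: "Vfun Q R xs us m x = (INF \<gamma> \<in> {\<gamma>. vfeas xs m x \<gamma>}. vcost Q R xs us m \<gamma>)"
  unfolding Vfun_def vfeas_def vcost_def by simp

lemma Vfun_le: "vfeas xs m x \<gamma> \<Longrightarrow> Vfun Q R xs us m x \<le> vcost Q R xs us m \<gamma>"
  unfolding Vfun_alt by (rule INF_lower) simp

lemma Vfun_approx:
  assumes "Vfun Q R xs us m x < top" "0 < e"
  shows "\<exists>\<gamma>. vfeas xs m x \<gamma> \<and> vcost Q R xs us m \<gamma> < Vfun Q R xs us m x + ennreal e"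
proof -
  have "Vfun Q R xs us m x < Vfun Q R xs us m x + ennreal e"
    using assms by (simp add: ennreal_add_left_cancel_less[of _ 0, simplified])
  then show ?thesis unfolding Vfun_alt[of Q R xs us m x] by (simp add: INF_less_iff)
qed

lemma has_sum_single':
  assumes "a \<in> I" "\<And>x. x \<in> I \<Longrightarrow> x \<noteq> a \<Longrightarrow> f x = 0"
  shows "(f has_sum f a) I"
proof -
  have "(f has_sum f a) {a}" using has_sum_finite[of "{a}" f] by simp
  then show ?thesis by (subst (asm) has_sum_cong_neutral[where T=I and g=f]) (use assms in auto)
qed

lemma infsum_single:
  assumes "a \<in> I" "\<And>x. x \<in> I \<Longrightarrow> x \<noteq> a \<Longrightarrow> f x = 0"
  shows "infsum f I = f a"
  using has_sum_single'[of a I f, OF assms] by (simp add: infsumI)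

lemma Vfun_unit:
  assumes "p \<le> m"
  shows "Vfun Q R xs us m (xs p k0) \<le> cost_to_go Q R xs us p k0"
proof -
  define \<gamma> where "\<gamma> = (\<lambda>i k. if (i,k) = (p,k0) then 1 else (0::real))"
  have I: "(p,k0) \<in> {..m} \<times> (UNIV::nat set)" using assms by simp
  have "vfeas xs m (xs p k0) \<gamma>"
    unfolding vfeas_def
  proof (intro conjI)
    show "\<forall>i k. 0 \<le> \<gamma> i k" by (simp add: \<gamma>_def)
    show "((\<lambda>(i,k). \<gamma> i k) has_sum 1) ({..m} \<times> UNIV)"
    proof -
      have "((\<lambda>(i,k). \<gamma> i k) has_sum (\<lambda>(i,k). \<gamma> i k) (p,k0)) ({..m} \<times> UNIV)"
        by (rule has_sum_single'[OF I]) (auto simp: \<gamma>_def split: if_splits)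
      then show ?thesis by (simp add: \<gamma>_def)
    qed
    show "((\<lambda>(i,k). \<gamma> i k *\<^sub>R xs i k) has_sum xs p k0) ({..m} \<times> UNIV)"
    proof -
      have "((\<lambda>(i,k). \<gamma> i k *\<^sub>R xs i k) has_sum (\<lambda>(i,k). \<gamma> i k *\<^sub>R xs i k) (p,k0)) ({..m} \<times> UNIV)"
        by (rule has_sum_single'[OF I]) (auto simp: \<gamma>_def split: if_splits)
      then show ?thesis by (simp add: \<gamma>_def)
    qed
  qed
  hence "Vfun Q R xs us m (xs p k0) \<le> vcost Q R xs us m \<gamma>" by (rule Vfun_le)
  also have "vcost Q R xs us m \<gamma> = cost_to_go Q R xs us p k0"
    unfolding vcost_def by (subst infsum_single[OF I]) (auto simp: \<gamma>_def split: if_splits)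
  finally show ?thesis .
qed

lemma ctg_split:
  "cost_to_go Q R xs us i k = ennreal (stage_cost Q R (xs i k) (us i k)) + cost_to_go Q R xs us i (Suc k)"
proof -
  let ?e = "\<lambda>l. ennreal (stage_cost Q R (xs i (l + k)) (us i (l + k)))"
  have "(\<lambda>l. ?e (Suc l)) sums (\<Sum>l. ?e (Suc l))" by (rule summable_sums[OF summableI])
  hence "?e sums ((\<Sum>l. ?e (Suc l)) + ?e 0)" by (rule sums_Suc)
  hence "(\<Sum>l. ?e l) = (\<Sum>l. ?e (Suc l)) + ?e 0" by (rule sums_unique[symmetric])
  moreover have "(\<lambda>l. ?e (Suc l)) = (\<lambda>l. ennreal (stage_cost Q R (xs i (l + Suc k)) (us i (l + Suc k))))"
    by simp
  ultimately show ?thesis unfolding cost_to_go_def by (simp add: add.commute)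
qed

lemma ctg_iter:
  "cost_to_go Q R xs us i t = (\<Sum>k<n. ennreal (stage_cost Q R (xs i (t + k)) (us i (t + k)))) + cost_to_go Q R xs us i (t + n)"
proof (induction n)
  case 0 then show ?case by simp
next
  case (Suc n)
  then show ?case using ctg_split[of Q R xs us i "t + n"] by (simp add: add.assoc)
qed

lemma iter_ctg: "iter_cost Q R xs us i = cost_to_go Q R xs us i 0"
  unfolding iter_cost_def cost_to_go_def by simp

lemma vfeas_mid:
  assumes "vfeas xs m a g1" "vfeas xs m b g2"
  shows "vfeas xs m ((1/2) *\<^sub>R (a + b)) (\<lambda>i k. (g1 i k + g2 i k) / 2)"
  unfolding vfeas_def
proof (intro conjI)
  show "\<forall>i k. 0 \<le> (g1 i k + g2 i k) / 2" using assms unfolding vfeas_def by (simp add: add_nonneg_nonneg)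
  have h1: "((\<lambda>(i,k). g1 i k) has_sum 1) ({..m} \<times> UNIV)" "((\<lambda>(i,k). g2 i k) has_sum 1) ({..m} \<times> UNIV)"
    using assms unfolding vfeas_def by auto
  have "((\<lambda>p. (1/2) * ((\<lambda>(i,k). g1 i k) p + (\<lambda>(i,k). g2 i k) p)) has_sum ((1/2) * (1 + 1))) ({..m} \<times> UNIV)"
    by (intro has_sum_cmult_right has_sum_add h1)
  hence "((\<lambda>p. (1/2) * ((\<lambda>(i,k). g1 i k) p + (\<lambda>(i,k). g2 i k) p)) has_sum 1) ({..m} \<times> UNIV)" by simp
  then show "((\<lambda>(i,k). (g1 i k + g2 i k) / 2) has_sum 1) ({..m} \<times> UNIV)"
    by (rule has_sum_cong[THEN iffD1, rotated]) (auto simp: split_beta)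
  have h2: "((\<lambda>(i,k). g1 i k *\<^sub>R xs i k) has_sum a) ({..m} \<times> UNIV)" "((\<lambda>(i,k). g2 i k *\<^sub>R xs i k) has_sum b) ({..m} \<times> UNIV)"
    using assms unfolding vfeas_def by auto
  have "((\<lambda>p. (1/2) *\<^sub>R ((\<lambda>(i,k). g1 i k *\<^sub>R xs i k) p + (\<lambda>(i,k). g2 i k *\<^sub>R xs i k) p)) has_sum ((1/2) *\<^sub>R (a + b))) ({..m} \<times> UNIV)"
    by (intro has_sum_scaleR has_sum_add h2)
  then show "((\<lambda>(i,k). ((g1 i k + g2 i k) / 2) *\<^sub>R xs i k) has_sum ((1/2) *\<^sub>R (a + b))) ({..m} \<times> UNIV)"
    by (rule has_sum_cong[THEN iffD1, rotated]) (auto simp: split_beta add_divide_distrib scaleR_add_left scaleR_add_right)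
qed

lemma vcost_mid:
  assumes "vfeas xs m a g1" "vfeas xs m b g2"
  shows "2 * vcost Q R xs us m (\<lambda>i k. (g1 i k + g2 i k) / 2) = vcost Q R xs us m g1 + vcost Q R xs us m g2"
proof -
  have nn: "0 \<le> g1 i k" "0 \<le> g2 i k" for i k using assms unfolding vfeas_def by auto
  have pt: "2 * (ennreal ((g1 i k + g2 i k) / 2) * c) = ennreal (g1 i k) * c + ennreal (g2 i k) * c" for i k c
  proof -
    have y: "0 \<le> (g1 i k + g2 i k) / 2" using nn[of i k] by simp
    have "2 * ennreal ((g1 i k + g2 i k) / 2) = ennreal (2 * ((g1 i k + g2 i k) / 2))"
      using y by (metis ennreal_mult ennreal_numeral zero_le_numeral)
    also have "\<dots> = ennreal (g1 i k + g2 i k)" by (rule arg_cong[where f=ennreal]) (simp add: field_simps)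
    also have "\<dots> = ennreal (g1 i k) + ennreal (g2 i k)" using nn[of i k] by (simp add: ennreal_plus)
    finally show ?thesis by (metis distrib_right mult.assoc)
  qed
  have "2 * vcost Q R xs us m (\<lambda>i k. (g1 i k + g2 i k) / 2)
     = (\<Sum>\<^sub>\<infinity>p\<in>{..m} \<times> UNIV. 2 * (case p of (i,k) \<Rightarrow> ennreal ((g1 i k + g2 i k) / 2) * cost_to_go Q R xs us i k))"
    unfolding vcost_def by (subst infsum_ennreal_cmult) auto
  also have "\<dots> = (\<Sum>\<^sub>\<infinity>p\<in>{..m} \<times> UNIV. (case p of (i,k) \<Rightarrow> ennreal (g1 i k) * cost_to_go Q R xs us i k)
        + (case p of (i,k) \<Rightarrow> ennreal (g2 i k) * cost_to_go Q R xs us i k))"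
    by (rule infsum_cong) (auto simp: pt)
  also have "\<dots> = vcost Q R xs us m g1 + vcost Q R xs us m g2"
    unfolding vcost_def by (rule infsum_ennreal_add)
  finally show ?thesis .
qed

lemma Vfun_mid:
  "2 * Vfun Q R xs us m ((1/2) *\<^sub>R (a + b)) \<le> Vfun Q R xs us m a + Vfun Q R xs us m b"
proof (rule ennreal_le_epsilon)
  fix e :: real
  assume fin: "Vfun Q R xs us m a + Vfun Q R xs us m b < top" and e: "0 < e"
  have fa: "Vfun Q R xs us m a < top" and fb: "Vfun Q R xs us m b < top" using fin by (auto simp: top_unique)
  obtain g1 where g1: "vfeas xs m a g1" "vcost Q R xs us m g1 < Vfun Q R xs us m a + ennreal (e/2)"
    using Vfun_approx[OF fa, of "e/2"] e by auto
  obtain g2 where g2: "vfeas xs m b g2" "vcost Q R xs us m g2 < Vfun Q R xs us m b + ennreal (e/2)"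
    using Vfun_approx[OF fb, of "e/2"] e by auto
  have "2 * Vfun Q R xs us m ((1/2) *\<^sub>R (a + b)) \<le> 2 * vcost Q R xs us m (\<lambda>i k. (g1 i k + g2 i k) / 2)"
    by (intro mult_left_mono Vfun_le vfeas_mid g1 g2) simp
  also have "\<dots> = vcost Q R xs us m g1 + vcost Q R xs us m g2" by (rule vcost_mid[OF g1(1) g2(1)])
  also have "\<dots> \<le> (Vfun Q R xs us m a + ennreal (e/2)) + (Vfun Q R xs us m b + ennreal (e/2))"
    using g1 g2 by (intro add_mono) auto
  also have "\<dots> = Vfun Q R xs us m a + Vfun Q R xs us m b + ennreal e"
    using e by (simp add: ennreal_plus[symmetric] del: ennreal_plus)
  finally show "2 * Vfun Q R xs us m ((1/2) *\<^sub>R (a + b)) \<le> Vfun Q R xs us m a + Vfun Q R xs us m b + ennreal e" .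
qed

lemma stage_mid:
  assumes "psd Q" "pd R"
  shows "stage_cost Q R ((1/2) *\<^sub>R (x1 + x2)) ((1/2) *\<^sub>R (u1 + u2)) =
    (stage_cost Q R x1 u1 + stage_cost Q R x2 u2) / 2
    - ((x1 - x2) \<bullet> (Q *v (x1 - x2)) + (u1 - u2) \<bullet> (R *v (u1 - u2))) / 4"
  unfolding stage_cost_def
  using quad_mid[OF assms(1) refl, of x1 x2] quad_mid[OF pd_psd[OF assms(2)] refl, of u1 u2]
  by argo

lemma lmpc_cost_eq:
  assumes "psd Q" "pd R"
  shows "lmpc_cost A B Q R N xs us i x v =
     ennreal (\<Sum>k<N. stage_cost Q R (pred_state A B x v k) (v k)) + Vfun Q R xs us (i - 1) (pred_state A B x v N)"
  unfolding lmpc_cost_def using stage_cost_nonneg[OF assms]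
  by (subst sum_ennreal) auto

lemma lmpc_unique:
  assumes Qpsd: "psd Q" and Rpd: "pd R" and cX: "convex X" and cU: "convex U"
    and N1: "N \<ge> 1"
    and fv: "lmpc_feasible A B X U N xs i x v" and fw: "lmpc_feasible A B X U N xs i x w"
    and opt: "\<And>w'. lmpc_feasible A B X U N xs i x w' \<Longrightarrow> lmpc_cost A B Q R N xs us i x v \<le> lmpc_cost A B Q R N xs us i x w'"
    and eq: "lmpc_cost A B Q R N xs us i x v = lmpc_cost A B Q R N xs us i x w"
    and fin: "lmpc_cost A B Q R N xs us i x v < top"
  shows "v 0 = w 0"
proof (rule ccontr)
  assume ne: "v 0 \<noteq> w 0"
  define mid where "mid = (\<lambda>k. (1/2) *\<^sub>R (v k + w k))"
  let ?pv = "pred_state A B x v" and ?pw = "pred_state A B x w" and ?pm = "pred_state A B x mid"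
  have pm: "?pm k = (1/2) *\<^sub>R (?pv k + ?pw k)" for k unfolding mid_def by (rule pred_mid)
  have half: "(1/2) *\<^sub>R (a + b) \<in> S" if "convex S" "a \<in> S" "b \<in> S" for S and a b :: "'z::real_vector"
  proof -
    have "(1/2) *\<^sub>R a + (1/2) *\<^sub>R b \<in> S" by (rule convexD[OF that]) auto
    then show ?thesis by (simp add: scaleR_add_right)
  qed
  have fm: "lmpc_feasible A B X U N xs i x mid"
    unfolding lmpc_feasible_def
  proof (intro conjI allI impI)
    fix k assume "k < N"
    then show "?pm k \<in> X" "mid k \<in> U" unfolding pm using fv fw unfolding lmpc_feasible_def mid_def
      by (auto intro!: half cX cU)
  next
    show "?pm N \<in> safe_set xs (i - 1)" unfolding pm using fv fw unfolding lmpc_feasible_def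
      by (auto intro!: half safe_set_convex)
  qed
  define hv where "hv k = stage_cost Q R (?pv k) (v k)" for k
  define hw where "hw k = stage_cost Q R (?pw k) (w k)" for k
  define hm where "hm k = stage_cost Q R (?pm k) (mid k)" for k
  define \<delta> where "\<delta> = ((v 0 - w 0) \<bullet> (R *v (v 0 - w 0))) / 4"
  have \<delta>: "0 < \<delta>" using Rpd ne unfolding \<delta>_def pd_def by auto
  have hm_eq: "hm k = (hv k + hw k) / 2 - ((?pv k - ?pw k) \<bullet> (Q *v (?pv k - ?pw k)) + (v k - w k) \<bullet> (R *v (v k - w k))) / 4" for k
    unfolding hm_def hv_def hw_def pm unfolding mid_def by (rule stage_mid[OF Qpsd Rpd])
  have hm_le: "hm k \<le> (hv k + hw k) / 2" for k
    using hm_eq[of k] quad_nonneg[OF Qpsd, of "?pv k - ?pw k"] quad_nonneg[OF pd_psd[OF Rpd], of "v k - w k"]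
    by argo
  have hm0: "hm 0 \<le> (hv 0 + hw 0) / 2 - \<delta>"
    using hm_eq[of 0] unfolding \<delta>_def by simp
  obtain N' where N': "N = Suc N'" using N1 by (cases N) auto
  have Sm: "(\<Sum>k<N. hm k) \<le> ((\<Sum>k<N. hv k) + (\<Sum>k<N. hw k)) / 2 - \<delta>"
  proof -
    have "(\<Sum>k<N'. hm (Suc k)) \<le> (\<Sum>k<N'. (hv (Suc k) + hw (Suc k)) / 2)"
      by (intro sum_mono hm_le)
    also have "\<dots> = ((\<Sum>k<N'. hv (Suc k)) + (\<Sum>k<N'. hw (Suc k))) / 2"
      by (simp add: sum.distrib sum_divide_distrib[symmetric])
    finally show ?thesis unfolding N' sum.lessThan_Suc_shift using hm0 by argo
  qed
  let ?Vv = "Vfun Q R xs us (i - 1) (?pv N)" and ?Vw = "Vfun Q R xs us (i - 1) (?pw N)"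
    and ?Vm = "Vfun Q R xs us (i - 1) (?pm N)"
  have cv: "lmpc_cost A B Q R N xs us i x v = ennreal (\<Sum>k<N. hv k) + ?Vv"
    unfolding hv_def by (rule lmpc_cost_eq[OF Qpsd Rpd])
  have cw: "lmpc_cost A B Q R N xs us i x w = ennreal (\<Sum>k<N. hw k) + ?Vw"
    unfolding hw_def by (rule lmpc_cost_eq[OF Qpsd Rpd])
  have cm: "lmpc_cost A B Q R N xs us i x mid = ennreal (\<Sum>k<N. hm k) + ?Vm"
    unfolding hm_def by (rule lmpc_cost_eq[OF Qpsd Rpd])
  have Vv: "?Vv < top" using fin cv by (auto simp: top_unique)
  have Vw: "?Vw < top" using fin cw eq by (auto simp: top_unique)
  have mid2: "2 * ?Vm \<le> ?Vv + ?Vw" unfolding pm by (rule Vfun_mid)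
  have Vm: "?Vm < top"
  proof -
    have "?Vv + ?Vw < top" using Vv Vw by (simp add: ennreal_add_less_top)
    hence "2 * ?Vm < top" using mid2 by (rule le_less_trans[rotated])
    then show ?thesis by (auto simp: ennreal_mult_less_top)
  qed
  define rv where "rv = enn2real ?Vv"
  define rw where "rw = enn2real ?Vw"
  define rm where "rm = enn2real ?Vm"
  have ev: "?Vv = ennreal rv" and ew: "?Vw = ennreal rw" and em: "?Vm = ennreal rm"
    using Vv Vw Vm unfolding rv_def rw_def rm_def by auto
  have nn: "0 \<le> rv" "0 \<le> rw" "0 \<le> rm" unfolding rv_def rw_def rm_def by auto
  have snn: "0 \<le> (\<Sum>k<N. hv k)" "0 \<le> (\<Sum>k<N. hw k)" "0 \<le> (\<Sum>k<N. hm k)"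
    unfolding hv_def hw_def hm_def using stage_cost_nonneg[OF Qpsd Rpd] by (auto intro: sum_nonneg)
  have "lmpc_cost A B Q R N xs us i x v \<le> lmpc_cost A B Q R N xs us i x mid" by (rule opt[OF fm])
  hence i1: "(\<Sum>k<N. hv k) + rv \<le> (\<Sum>k<N. hm k) + rm"
    unfolding cv cm ev em using nn snn by (simp add: ennreal_plus[symmetric] del: ennreal_plus)
  have i2: "(\<Sum>k<N. hv k) + rv = (\<Sum>k<N. hw k) + rw"
    using eq unfolding cv cw ev ew using nn snn by (simp add: ennreal_plus[symmetric] del: ennreal_plus)
  have i3: "2 * rm \<le> rv + rw"
    using mid2 unfolding ev ew em using nn
    by (simp add: ennreal_plus[symmetric] ennreal_mult del: ennreal_plus)
      (metis ennreal_le_iff ennreal_mult ennreal_numeral zero_le_numeral add_nonneg_nonneg)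
  show False using i1 i2 i3 Sm \<delta> by argo
qed

lemma shift_has_sum:
  fixes f :: "nat \<Rightarrow> nat \<Rightarrow> 'b::{comm_monoid_add,topological_space}"
  assumes "((\<lambda>(i,k). f i k) has_sum s) ({..m} \<times> UNIV)"
  shows "((\<lambda>(i,k). if k = 0 then 0 else f i (k - 1)) has_sum s) ({..m} \<times> UNIV)"
proof -
  let ?h = "\<lambda>(i::nat,k::nat). (i, Suc k)"
  let ?g = "\<lambda>(i,k). if k = 0 then 0 else f i (k - 1)"
  have inj: "inj_on ?h ({..m} \<times> UNIV)" by (auto simp: inj_on_def)
  have "((?g \<circ> ?h) has_sum s) ({..m} \<times> UNIV)"
    using assms by (rule has_sum_cong[THEN iffD1, rotated]) auto
  hence "(?g has_sum s) (?h ` ({..m} \<times> UNIV))" by (rule has_sum_reindex[OF inj, THEN iffD2])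
  moreover have img: "?h ` ({..m} \<times> UNIV) = {..m} \<times> {k. k \<noteq> 0}"
  proof
    show "?h ` ({..m} \<times> UNIV) \<subseteq> {..m} \<times> {k. k \<noteq> 0}" by auto
    show "{..m} \<times> {k. k \<noteq> 0} \<subseteq> ?h ` ({..m} \<times> UNIV)"
    proof
      fix p assume "p \<in> {..m} \<times> {k::nat. k \<noteq> 0}"
      then obtain i k where p: "p = (i, Suc k)" "i \<le> m" by (cases p) (auto dest: gr0_implies_Suc)
      then have "(i, k) \<in> {..m} \<times> UNIV" "p = ?h (i, k)" by auto
      then show "p \<in> ?h ` ({..m} \<times> UNIV)" by blast
    qed
  qed
  ultimately have "(?g has_sum s) ({..m} \<times> {k. k \<noteq> 0})" by simp
  then show ?thesis
    by (subst (asm) has_sum_cong_neutral[where T="{..m} \<times> UNIV" and g="?g"]) (auto split: if_splits)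
qed

lemma shift_infsum:
  fixes f :: "nat \<Rightarrow> nat \<Rightarrow> ennreal"
  shows "(\<Sum>\<^sub>\<infinity>(i,k)\<in>{..m} \<times> UNIV. if k = 0 then 0 else f i (k - 1)) = (\<Sum>\<^sub>\<infinity>(i,k)\<in>{..m} \<times> UNIV. f i k)"
proof -
  have "((\<lambda>(i,k). f i k) has_sum (\<Sum>\<^sub>\<infinity>(i,k)\<in>{..m} \<times> UNIV. f i k)) ({..m} \<times> UNIV)"
    by (rule has_sum_infsum) (simp add: nonneg_summable_on_complete)
  from shift_has_sum[OF this] show ?thesis by (rule infsumI)
qed

lemma jensen_quad:
  fixes y :: "'i \<Rightarrow> real^'n"
  assumes M: "psd M" and nn: "\<And>p. p \<in> I \<Longrightarrow> 0 \<le> g p" and g1: "(g has_sum 1) I"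
    and gy: "((\<lambda>p. g p *\<^sub>R y p) has_sum w) I"
    and sm: "(\<lambda>p. g p * (y p \<bullet> (M *v y p))) summable_on I"
  shows "w \<bullet> (M *v w) \<le> infsum (\<lambda>p. g p * (y p \<bullet> (M *v y p))) I"
proof -
  let ?c = "M *v w"
  have h1: "((\<lambda>p. g p * (w \<bullet> ?c)) has_sum (1 * (w \<bullet> ?c))) I"
    by (rule has_sum_cmult_left[OF g1])
  have h2: "((\<lambda>p. 2 * (?c \<bullet> (g p *\<^sub>R y p))) has_sum (2 * (?c \<bullet> w))) I"
    by (rule has_sum_cmult_right, rule has_sum_bounded_linear[OF bounded_linear_inner_right gy])
  have h3: "((\<lambda>p. (-2) * (g p * (?c \<bullet> w))) has_sum ((-2) * (1 * (?c \<bullet> w)))) I"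
    by (rule has_sum_cmult_right, rule has_sum_cmult_left[OF g1])
  have hs: "((\<lambda>p. g p * (w \<bullet> ?c) + 2 * (?c \<bullet> (g p *\<^sub>R y p)) + (-2) * (g p * (?c \<bullet> w))) has_sum
       (1 * (w \<bullet> ?c) + 2 * (?c \<bullet> w) + (-2) * (1 * (?c \<bullet> w)))) I"
    by (intro has_sum_add h1 h2 h3)
  have le: "g p * (w \<bullet> ?c) + 2 * (?c \<bullet> (g p *\<^sub>R y p)) + (-2) * (g p * (?c \<bullet> w)) \<le> g p * (y p \<bullet> (M *v y p))"
    if "p \<in> I" for p
  proof -
    have t: "y p \<bullet> (M *v y p) = w \<bullet> ?c + 2 * (?c \<bullet> (y p - w)) + (y p - w) \<bullet> (M *v (y p - w))"
      by (rule quad_tangent[OF M])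
    have "w \<bullet> ?c + 2 * (?c \<bullet> (y p - w)) \<le> y p \<bullet> (M *v y p)"
      using t quad_nonneg[OF M, of "y p - w"] by argo
    hence "g p * (w \<bullet> ?c + 2 * (?c \<bullet> (y p - w))) \<le> g p * (y p \<bullet> (M *v y p))"
      using nn[OF that] by (rule mult_left_mono)
    moreover have "g p * (w \<bullet> ?c + 2 * (?c \<bullet> (y p - w))) = g p * (w \<bullet> ?c) + 2 * (?c \<bullet> (g p *\<^sub>R y p)) + (-2) * (g p * (?c \<bullet> w))"
      by (simp add: inner_diff_right distrib_left right_diff_distrib)
    ultimately show ?thesis by simp
  qed
  have "1 * (w \<bullet> ?c) + 2 * (?c \<bullet> w) + (-2) * (1 * (?c \<bullet> w)) \<le> infsum (\<lambda>p. g p * (y p \<bullet> (M *v y p))) I"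
    by (rule has_sum_mono[OF hs has_sum_infsum[OF sm]]) (rule le)
  moreover have "w \<bullet> ?c = ?c \<bullet> w" by (rule inner_commute)
  ultimately show ?thesis by argo
qed

lemma one_step:
  fixes A :: "real^'n^'n" and B :: "real^'d^'n" and Q :: "real^'n^'n" and R :: "real^'d^'d"
    and xs :: "nat \<Rightarrow> nat \<Rightarrow> real^'n" and us :: "nat \<Rightarrow> nat \<Rightarrow> real^'d"
  assumes Qpsd: "psd Q" and Rpd: "pd R"
    and dyn: "\<And>i t. i \<le> m \<Longrightarrow> xs i (Suc t) = A *v xs i t + B *v us i t"
    and uU: "\<And>i t. i \<le> m \<Longrightarrow> us i t \<in> U" and cU: "closed U" "convex U"
    and bnd: "\<And>i t. i \<le> m \<Longrightarrow> norm (us i t) \<le> K"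
    and fz: "vfeas xs m z \<gamma>" and fin: "vcost Q R xs us m \<gamma> < top"
  shows "\<exists>u\<in>U. A *v z + B *v u \<in> safe_set xs m \<and>
     ennreal (stage_cost Q R z u) + Vfun Q R xs us m (A *v z + B *v u) \<le> vcost Q R xs us m \<gamma>"
proof -
  define I where "I = {..m} \<times> (UNIV :: nat set)"
  define g where "g = (\<lambda>(i,k). \<gamma> i k)"
  have gnn: "0 \<le> g p" for p using fz unfolding vfeas_def g_def by (auto split: prod.splits)
  have g1: "(g has_sum 1) I" using fz unfolding vfeas_def g_def I_def by auto
  have gx: "((\<lambda>(i,k). \<gamma> i k *\<^sub>R xs i k) has_sum z) I" using fz unfolding vfeas_def I_def by auto
  have sumu: "(\<lambda>(i,k). \<gamma> i k *\<^sub>R us i k) summable_on I"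
  proof (rule abs_summable_summable)
    have "(\<lambda>p. K * g p) summable_on I" using has_sum_cmult_right[OF g1, of K] by (auto simp: summable_on_def)
    then show "(\<lambda>p. norm ((\<lambda>(i,k). \<gamma> i k *\<^sub>R us i k) p)) summable_on I"
    proof (rule summable_on_comparison_test)
      fix p assume "p \<in> I"
      then obtain i k where p: "p = (i,k)" "i \<le> m" unfolding I_def by auto
      have "norm (\<gamma> i k *\<^sub>R us i k) = g p * norm (us i k)" using gnn[of p] by (simp add: p g_def)
      also have "\<dots> \<le> g p * K" using gnn[of p] bnd[OF p(2)] by (intro mult_left_mono) auto
      finally show "norm ((\<lambda>(i,k). \<gamma> i k *\<^sub>R us i k) p) \<le> K * g p" by (simp add: p mult.commute)
    qed simp
  qed
  define u where "u = infsum (\<lambda>(i,k). \<gamma> i k *\<^sub>R us i k) I"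
  have gu: "((\<lambda>(i,k). \<gamma> i k *\<^sub>R us i k) has_sum u) I" unfolding u_def using sumu by simp
  have gu': "((\<lambda>p. g p *\<^sub>R (\<lambda>(i,k). us i k) p) has_sum u) I"
    using gu by (rule has_sum_cong[THEN iffD1, rotated]) (auto simp: g_def)
  have gx': "((\<lambda>p. g p *\<^sub>R (\<lambda>(i,k). xs i k) p) has_sum z) I"
    using gx by (rule has_sum_cong[THEN iffD1, rotated]) (auto simp: g_def)
  have uinU: "u \<in> U"
  proof -
    have "u \<in> closure (convex hull U)"
      by (rule has_sum_in_closure_hull[OF _ g1 gu'])
         (use gnn uU in \<open>auto simp: I_def\<close>)
    then show ?thesis using cU by (simp add: convex_hull_eq[THEN iffD2])
  qed
  have gx1: "((\<lambda>(i,k). \<gamma> i k *\<^sub>R xs i (Suc k)) has_sum (A *v z + B *v u)) I"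
  proof -
    have "((\<lambda>p. A *v ((\<lambda>(i,k). \<gamma> i k *\<^sub>R xs i k) p) + B *v ((\<lambda>(i,k). \<gamma> i k *\<^sub>R us i k) p)) has_sum (A *v z + B *v u)) I"
      by (intro has_sum_add has_sum_bounded_linear[OF matrix_vector_mul_bounded_linear] gx gu)
    then show ?thesis
      by (rule has_sum_cong[THEN iffD1, rotated])
         (auto simp: I_def dyn matrix_vector_mult_scaleR scaleR_add_right)
  qed
  have gx1': "((\<lambda>p. g p *\<^sub>R (\<lambda>(i,k). xs i (Suc k)) p) has_sum (A *v z + B *v u)) I"
    using gx1 by (rule has_sum_cong[THEN iffD1, rotated]) (auto simp: g_def)
  have inS: "A *v z + B *v u \<in> safe_set xs m"
    unfolding safe_set_def
    by (rule has_sum_in_closure_hull[OF _ g1 gx1'])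
       (use gnn in \<open>auto simp: I_def\<close>)
  define \<gamma>' where "\<gamma>' = (\<lambda>i k. if k = 0 then 0 else \<gamma> i (k - 1))"
  have f': "vfeas xs m (A *v z + B *v u) \<gamma>'"
    unfolding vfeas_def
  proof (intro conjI)
    show "\<forall>i k. 0 \<le> \<gamma>' i k" using fz unfolding vfeas_def \<gamma>'_def by auto
    show "((\<lambda>(i,k). \<gamma>' i k) has_sum 1) ({..m} \<times> UNIV)"
      unfolding \<gamma>'_def using shift_has_sum[where f=\<gamma> and s=1 and m=m] g1 unfolding g_def I_def by simp
    have "((\<lambda>(i,k). if k = 0 then 0 else \<gamma> i (k - 1) *\<^sub>R xs i (Suc (k - 1))) has_sum (A *v z + B *v u)) ({..m} \<times> UNIV)"
      using shift_has_sum[where f="\<lambda>i k. \<gamma> i k *\<^sub>R xs i (Suc k)" and s="A *v z + B *v u" and m=m] gx1 unfolding I_def by simp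
    then show "((\<lambda>(i,k). \<gamma>' i k *\<^sub>R xs i k) has_sum (A *v z + B *v u)) ({..m} \<times> UNIV)"
      by (rule has_sum_cong[THEN iffD1, rotated]) (auto simp: \<gamma>'_def)
  qed
  define C1 where "C1 = (\<Sum>\<^sub>\<infinity>(i,k)\<in>I. ennreal (\<gamma> i k) * cost_to_go Q R xs us i (Suc k))"
  define hr where "hr = (\<lambda>(i,k). \<gamma> i k * stage_cost Q R (xs i k) (us i k))"
  define H where "H = (\<Sum>\<^sub>\<infinity>p\<in>I. ennreal (hr p))"
  have V1: "Vfun Q R xs us m (A *v z + B *v u) \<le> C1"
  proof -
    have "Vfun Q R xs us m (A *v z + B *v u) \<le> vcost Q R xs us m \<gamma>'" by (rule Vfun_le[OF f'])
    also have "vcost Q R xs us m \<gamma>' = (\<Sum>\<^sub>\<infinity>(i,k)\<in>{..m} \<times> UNIV. if k = 0 then 0 else ennreal (\<gamma> i (k - 1)) * cost_to_go Q R xs us i (Suc (k - 1)))"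
      unfolding vcost_def \<gamma>'_def by (rule infsum_cong) auto
    also have "\<dots> = C1" unfolding C1_def I_def
      by (rule shift_infsum[where f="\<lambda>i k. ennreal (\<gamma> i k) * cost_to_go Q R xs us i (Suc k)" and m=m])
    finally show ?thesis .
  qed
  have split: "vcost Q R xs us m \<gamma> = H + C1"
  proof -
    have "vcost Q R xs us m \<gamma> = (\<Sum>\<^sub>\<infinity>p\<in>I. ennreal (hr p)
        + (case p of (i,k) \<Rightarrow> ennreal (\<gamma> i k) * cost_to_go Q R xs us i (Suc k)))"
      unfolding vcost_def I_def
    proof (rule infsum_cong)
      fix p :: "nat \<times> nat"
      obtain i k where p: "p = (i,k)" by (cases p)
      have "ennreal (\<gamma> i k * stage_cost Q R (xs i k) (us i k)) = ennreal (\<gamma> i k) * ennreal (stage_cost Q R (xs i k) (us i k))"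
        using gnn[of p] stage_cost_nonneg[OF Qpsd Rpd] by (simp add: p g_def ennreal_mult)
      then show "(case p of (i,k) \<Rightarrow> ennreal (\<gamma> i k) * cost_to_go Q R xs us i k) =
        ennreal (hr p) + (case p of (i,k) \<Rightarrow> ennreal (\<gamma> i k) * cost_to_go Q R xs us i (Suc k))"
        by (simp add: p hr_def ctg_split[of Q R xs us i k] distrib_left)
    qed
    also have "\<dots> = H + C1" unfolding H_def C1_def by (rule infsum_ennreal_add)
    finally show ?thesis .
  qed
  have Hfin: "H \<noteq> top" using fin split by (auto simp: top_unique)
  have hnn: "0 \<le> hr p" for p
    using gnn[of p] stage_cost_nonneg[OF Qpsd Rpd] by (auto simp: g_def hr_def split: prod.splits)
  have Hs: "hr summable_on I" and He: "H = ennreal (infsum hr I)"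
    using ennreal_infsum_real[of I hr] Hfin hnn unfolding H_def by auto
  define fQ where "fQ = (\<lambda>p. g p * ((\<lambda>(i,k). xs i k) p \<bullet> (Q *v (\<lambda>(i,k). xs i k) p)))"
  define fR where "fR = (\<lambda>p. g p * ((\<lambda>(i,k). us i k) p \<bullet> (R *v (\<lambda>(i,k). us i k) p)))"
  have fsum: "hr = (\<lambda>p. fQ p + fR p)"
    by (auto simp: fQ_def fR_def g_def hr_def stage_cost_def distrib_left)
  have fQnn: "0 \<le> fQ p" and fRnn: "0 \<le> fR p" for p
    unfolding fQ_def fR_def using gnn[of p] quad_nonneg[OF Qpsd] quad_nonneg[OF pd_psd[OF Rpd]]
    by (auto split: prod.splits)
  have sQ: "fQ summable_on I"
    by (rule summable_on_comparison_test[OF Hs]) (use fQnn fRnn in \<open>auto simp: fsum\<close>)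
  have sR: "fR summable_on I"
    by (rule summable_on_comparison_test[OF Hs]) (use fQnn fRnn in \<open>auto simp: fsum\<close>)
  have jQ: "z \<bullet> (Q *v z) \<le> infsum fQ I"
    unfolding fQ_def
    by (rule jensen_quad[OF Qpsd _ g1 gx']) (use gnn sQ in \<open>auto simp: fQ_def\<close>)
  have jR: "u \<bullet> (R *v u) \<le> infsum fR I"
    unfolding fR_def
    by (rule jensen_quad[OF pd_psd[OF Rpd] _ g1 gu']) (use gnn sR in \<open>auto simp: fR_def\<close>)
  have "stage_cost Q R z u \<le> infsum hr I"
    unfolding fsum infsum_add[OF sQ sR] stage_cost_def using jQ jR by (rule add_mono)
  hence "ennreal (stage_cost Q R z u) \<le> H" unfolding He by (rule ennreal_leI)
  hence "ennreal (stage_cost Q R z u) + Vfun Q R xs us m (A *v z + B *v u) \<le> H + C1"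
    using V1 by (rule add_mono)
  then show ?thesis using uinU inS split by auto
qed

lemma decrease:
  fixes A :: "real^'n^'n" and B :: "real^'d^'n" and Q :: "real^'n^'n" and R :: "real^'d^'d"
    and xs :: "nat \<Rightarrow> nat \<Rightarrow> real^'n" and us :: "nat \<Rightarrow> nat \<Rightarrow> real^'d"
  assumes Qpsd: "psd Q" and Rpd: "pd R"
    and cX: "closed X" "convex X" and cU: "closed U" "convex U"
    and N1: "N \<ge> 1"
    and dyn: "\<And>i' t. i' \<le> i - 1 \<Longrightarrow> xs i' (Suc t) = A *v xs i' t + B *v us i' t"
    and xX: "\<And>i' t. i' \<le> i - 1 \<Longrightarrow> xs i' t \<in> X"
    and uU: "\<And>i' t. i' \<le> i - 1 \<Longrightarrow> us i' t \<in> U"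
    and bnd: "\<And>i' t. i' \<le> i - 1 \<Longrightarrow> norm (us i' t) \<le> K"
    and ov: "lmpc_optimal A B X U Q R N xs us i x v"
    and ow: "lmpc_optimal A B X U Q R N xs us i (A *v x + B *v v 0) w"
  shows "lmpc_cost A B Q R N xs us i (A *v x + B *v v 0) w + ennreal (stage_cost Q R x (v 0))
           \<le> lmpc_cost A B Q R N xs us i x v"
proof -
  let ?m = "i - 1"
  let ?x' = "A *v x + B *v v 0"
  let ?z = "pred_state A B x v N"
  let ?V = "Vfun Q R xs us ?m"
  obtain N' where N': "N = Suc N'" using N1 by (cases N) auto
  have fv: "lmpc_feasible A B X U N xs i x v" using ov unfolding lmpc_optimal_def by blast
  have SX: "safe_set xs ?m \<subseteq> X" by (rule safe_set_sub[OF cX xX])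
  define S' where "S' = (\<Sum>k<N'. ennreal (stage_cost Q R (pred_state A B x v (Suc k)) (v (Suc k))))"
  have cv: "lmpc_cost A B Q R N xs us i x v = ennreal (stage_cost Q R x (v 0)) + S' + ?V ?z"
    unfolding lmpc_cost_def N' sum.lessThan_Suc_shift S'_def by simp
  show ?thesis
  proof (cases "?V ?z < top")
    case False
    hence "?V ?z = top" using top.not_eq_extremum by blast
    then show ?thesis unfolding cv by simp
  next
    case True
    show ?thesis
    proof (rule ennreal_le_epsilon)
      fix e :: real assume e: "0 < e"
      obtain \<gamma> where g: "vfeas xs ?m ?z \<gamma>" "vcost Q R xs us ?m \<gamma> < ?V ?z + ennreal e"
        using Vfun_approx[OF True e] by blast
      have gfin: "vcost Q R xs us ?m \<gamma> < top"
        using g(2) True by (metis ennreal_add_less_top ennreal_less_top order.strict_trans)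
      obtain u' where u': "u' \<in> U" "A *v ?z + B *v u' \<in> safe_set xs ?m"
        "ennreal (stage_cost Q R ?z u') + ?V (A *v ?z + B *v u') \<le> vcost Q R xs us ?m \<gamma>"
        using one_step[OF Qpsd Rpd dyn uU cU bnd g(1) gfin] by blast
      define w' where "w' = (\<lambda>k. if k < N' then v (Suc k) else u')"
      have pw: "pred_state A B ?x' w' k = pred_state A B x v (Suc k)" if "k \<le> N'" for k
        unfolding pred_shift using that by (intro pred_cong) (auto simp: w'_def)
      have pwN: "pred_state A B ?x' w' N = A *v ?z + B *v u'"
        unfolding N' using pw[of N'] by (simp add: w'_def)
      have fw': "lmpc_feasible A B X U N xs i ?x' w'"
        unfolding lmpc_feasible_def
      proof (intro conjI allI impI)
        fix k assume k: "k < N"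
        show "pred_state A B ?x' w' k \<in> X"
        proof (cases "k < N'")
          case True then show ?thesis using fv pw[of k] unfolding lmpc_feasible_def N' by auto
        next
          case False
          hence "k = N'" using k N' by auto
          then show ?thesis using fv pw[of k] SX unfolding lmpc_feasible_def N' by auto
        qed
        show "w' k \<in> U" using fv u'(1) k unfolding lmpc_feasible_def w'_def N' by auto
      next
        show "pred_state A B ?x' w' N \<in> safe_set xs (i - 1)" using pwN u'(2) by simp
      qed
      have "lmpc_cost A B Q R N xs us i ?x' w \<le> lmpc_cost A B Q R N xs us i ?x' w'"
        using ow fw' unfolding lmpc_optimal_def by blast
      also have "lmpc_cost A B Q R N xs us i ?x' w' = S' + ennreal (stage_cost Q R ?z u') + ?V (A *v ?z + B *v u')"
      proof -
        have "(\<Sum>k<N'. ennreal (stage_cost Q R (pred_state A B ?x' w' k) (w' k))) = S'"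
          unfolding S'_def
        proof (rule sum.cong)
          fix k assume "k \<in> {..<N'}"
          hence k: "k < N'" by simp
          have "w' k = v (Suc k)" using k by (simp add: w'_def)
          then show "ennreal (stage_cost Q R (pred_state A B ?x' w' k) (w' k)) =
            ennreal (stage_cost Q R (pred_state A B x v (Suc k)) (v (Suc k)))"
            using pw[of k] k by simp
        qed simp
        moreover have "pred_state A B ?x' w' N' = ?z" using pw[of N'] N' by simp
        ultimately show ?thesis unfolding lmpc_cost_def pwN unfolding N' sum.lessThan_Suc
          by (simp add: w'_def add.assoc)
      qed
      also have "\<dots> \<le> S' + vcost Q R xs us ?m \<gamma>" using u'(3) by (simp add: add.assoc add_left_mono)
      also have "\<dots> \<le> S' + (?V ?z + ennreal e)" using g(2) by (intro add_left_mono) simp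
      finally have "lmpc_cost A B Q R N xs us i ?x' w + ennreal (stage_cost Q R x (v 0))
          \<le> S' + (?V ?z + ennreal e) + ennreal (stage_cost Q R x (v 0))" by (rule add_right_mono)
      also have "\<dots> = lmpc_cost A B Q R N xs us i x v + ennreal e" unfolding cv by (simp add: ac_simps)
      finally show "lmpc_cost A B Q R N xs us i ?x' w + ennreal (stage_cost Q R x (v 0))
          \<le> lmpc_cost A B Q R N xs us i x v + ennreal e" .
    qed
  qed
qed

lemma telescope:
  fixes J :: "nat \<Rightarrow> ennreal" and c :: "nat \<Rightarrow> real"
  assumes "\<And>t. J (Suc t) + ennreal (c t) \<le> J t"
  shows "(\<Sum>l. ennreal (c (l + t))) \<le> J t"
proof -
  have "(\<Sum>l<n. ennreal (c (l + t))) + J (t + n) \<le> J t" for n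
  proof (induction n)
    case 0 then show ?case by simp
  next
    case (Suc n)
    have "(\<Sum>l<Suc n. ennreal (c (l + t))) + J (t + Suc n) = (\<Sum>l<n. ennreal (c (l + t))) + (J (Suc (t + n)) + ennreal (c (t + n)))"
      by (simp add: ac_simps)
    also have "\<dots> \<le> (\<Sum>l<n. ennreal (c (l + t))) + J (t + n)" by (intro add_left_mono assms)
    also have "\<dots> \<le> J t" by (rule Suc.IH)
    finally show ?case .
  qed
  hence "(\<Sum>l<n. ennreal (c (l + t))) + 0 \<le> J t" for n
    by (metis add.right_neutral add_left_mono le_zero_eq zero_le order_trans)
  then have "(\<Sum>l. ennreal (c (l + t))) + 0 \<le> J t" by (rule ennreal_suminf_bound_add)
  then show ?thesis by simp
qed

lemma traj_candidate:
  assumes Qpsd: "psd Q" and Rpd: "pd R" and p: "p \<le> i - 1"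
    and dynp: "\<And>s. xs p (Suc s) = A *v xs p s + B *v us p s"
    and xXp: "\<And>s. xs p s \<in> X" and uUp: "\<And>s. us p s \<in> U"
  shows "lmpc_feasible A B X U N xs i (xs p t) (\<lambda>k. us p (t + k))"
    and "lmpc_cost A B Q R N xs us i (xs p t) (\<lambda>k. us p (t + k)) \<le> cost_to_go Q R xs us p t"
proof -
  have pr: "pred_state A B (xs p t) (\<lambda>k. us p (t + k)) k = xs p (t + k)" for k
    by (rule pred_traj[where xs="xs p" and us="us p"]) (rule dynp)
  show "lmpc_feasible A B X U N xs i (xs p t) (\<lambda>k. us p (t + k))"
    unfolding lmpc_feasible_def pr using xXp uUp safe_set_mem[OF p] by auto
  have "lmpc_cost A B Q R N xs us i (xs p t) (\<lambda>k. us p (t + k))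
      = (\<Sum>k<N. ennreal (stage_cost Q R (xs p (t + k)) (us p (t + k)))) + Vfun Q R xs us (i - 1) (xs p (t + N))"
    unfolding lmpc_cost_def pr ..
  also have "\<dots> \<le> (\<Sum>k<N. ennreal (stage_cost Q R (xs p (t + k)) (us p (t + k)))) + cost_to_go Q R xs us p (t + N)"
    by (intro add_left_mono Vfun_unit p)
  also have "\<dots> = cost_to_go Q R xs us p t" by (rule ctg_iter[symmetric])
  finally show "lmpc_cost A B Q R N xs us i (xs p t) (\<lambda>k. us p (t + k)) \<le> cost_to_go Q R xs us p t" .
qed

lemma term_le_iter: "ennreal (stage_cost Q R (xs i t) (us i t)) \<le> iter_cost Q R xs us i"
proof -
  have "iter_cost Q R xs us i = (\<Sum>k<t. ennreal (stage_cost Q R (xs i (0 + k)) (us i (0 + k))))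
      + (ennreal (stage_cost Q R (xs i t) (us i t)) + cost_to_go Q R xs us i (Suc t))"
    unfolding iter_ctg using ctg_iter[of Q R xs us i 0 t] ctg_split[of Q R xs us i t] by simp
  then show ?thesis by (metis add.commute add.left_commute le_iff_add)
qed

lemma us_bound:
  fixes R :: "real^'d^'d" and us :: "nat \<Rightarrow> nat \<Rightarrow> real^'d"
  assumes Qpsd: "psd Q" and Rpd: "pd R" and fin: "\<And>i'. i' \<le> m \<Longrightarrow> iter_cost Q R xs us i' < top"
  shows "\<exists>K. \<forall>i'\<le>m. \<forall>t. norm (us i' t) \<le> K"
proof -
  obtain c where c: "0 < c" "\<And>u. c * (norm u)^2 \<le> u \<bullet> (R *v u)" using pd_coercive[OF Rpd] by blast
  define S where "S = (\<Sum>i'\<le>m. enn2real (iter_cost Q R xs us i'))"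
  have "norm (us i' t) \<le> 1 + S / c" if i': "i' \<le> m" for i' t
  proof -
    let ?x = "xs i' t" and ?u = "us i' t"
    have "ennreal (stage_cost Q R ?x ?u) \<le> iter_cost Q R xs us i'" by (rule term_le_iter)
    hence "stage_cost Q R ?x ?u \<le> enn2real (iter_cost Q R xs us i')"
      using fin[OF i'] stage_cost_nonneg[OF Qpsd Rpd]
      by (metis enn2real_ennreal enn2real_mono)
    also have "\<dots> \<le> S" unfolding S_def using i' by (intro member_le_sum) auto
    finally have hS: "stage_cost Q R ?x ?u \<le> S" .
    have "c * (norm ?u)^2 \<le> ?u \<bullet> (R *v ?u)" by (rule c(2))
    also have "\<dots> \<le> stage_cost Q R ?x ?u" unfolding stage_cost_def using quad_nonneg[OF Qpsd, of ?x] by simp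
    finally have "c * (norm ?u)^2 \<le> S" using hS by simp
    hence n2: "(norm ?u)^2 \<le> S / c" using c(1) by (simp add: pos_le_divide_eq mult.commute)
    have "norm ?u \<le> 1 + (norm ?u)^2"
    proof (cases "norm ?u \<le> 1")
      case True then show ?thesis by (simp add: add_increasing2)
    next
      case False
      hence "norm ?u * 1 \<le> norm ?u * norm ?u" by (intro mult_left_mono) auto
      then show ?thesis by (simp add: power2_eq_square)
    qed
    then show ?thesis using n2 by simp
  qed
  then show ?thesis by blast
qed

theorem lemma1:
  fixes A :: "real^'n^'n" and B :: "real^'d^'n"
    and Fx :: "real^'n^'p" and bx :: "real^'p"
    and Fu :: "real^'d^'q" and bu :: "real^'q"
    and Q :: "real^'n^'n" and R :: "real^'d^'d"
    and N :: nat and xS :: "real^'n"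
    and xs :: "nat \<Rightarrow> nat \<Rightarrow> real^'n" and us :: "nat \<Rightarrow> nat \<Rightarrow> real^'d"
    and j :: nat
  assumes X0: "0 \<in> interior (polyhedron Fx bx)"
    and U0: "0 \<in> interior (polyhedron Fu bu)"
    and Qpsd: "psd Q" and Rpd: "pd R"
    and init: "\<And>i. xs i 0 = xS"
    and traj0_dyn: "\<And>t. xs 0 (Suc t) = A *v xs 0 t + B *v us 0 t"
    and traj0_X: "\<And>t. xs 0 t \<in> polyhedron Fx bx"
    and traj0_U: "\<And>t. us 0 t \<in> polyhedron Fu bu"
    and traj0_xlim: "xs 0 \<longlonglongrightarrow> 0"
    and traj0_ulim: "us 0 \<longlonglongrightarrow> 0"
    and traj0_cost: "summable (\<lambda>t. stage_cost Q R (xs 0 t) (us 0 t))"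
    and closed_loop_dyn: "\<And>i t. i \<ge> 1 \<Longrightarrow> xs i (Suc t) = A *v xs i t + B *v us i t"
    and lmpc_policy: "\<And>i t. i \<ge> 1 \<Longrightarrow>
         \<exists>v. lmpc_optimal A B (polyhedron Fx bx) (polyhedron Fu bu) Q R N xs us i (xs i t) v
             \<and> us i t = v 0"
    and N1: "N \<ge> 1"
    and j1: "j \<ge> 1"
    and same_cost: "iter_cost Q R xs us (j - 1) = iter_cost Q R xs us j"
  shows "xs (j - 1) = xs j"
proof -
  let ?X = "polyhedron Fx bx" and ?U = "polyhedron Fu bu"
  have cX: "closed ?X" "convex ?X" by (rule polyhedron_closed, rule polyhedron_convex)
  have cU: "closed ?U" "convex ?U" by (rule polyhedron_closed, rule polyhedron_convex)
  define opt where "opt i t = (SOME v. lmpc_optimal A B ?X ?U Q R N xs us i (xs i t) v \<and> us i t = v 0)" for i t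
  have opt: "lmpc_optimal A B ?X ?U Q R N xs us i (xs i t) (opt i t) \<and> us i t = opt i t 0" if "i \<ge> 1" for i t
    unfolding opt_def using someI_ex[OF lmpc_policy[OF that, of t]] .
  have N0: "0 < N" using N1 by simp
  have dyn: "xs i (Suc t) = A *v xs i t + B *v us i t" for i t
    by (cases "i = 0") (auto simp: traj0_dyn closed_loop_dyn)
  have xX: "xs i t \<in> ?X" for i t
  proof (cases "i = 0")
    case True then show ?thesis using traj0_X by simp
  next
    case False
    hence "lmpc_feasible A B ?X ?U N xs i (xs i t) (opt i t)" using opt[of i t] unfolding lmpc_optimal_def by simp
    hence "pred_state A B (xs i t) (opt i t) 0 \<in> ?X" using N0 unfolding lmpc_feasible_def by blast
    then show ?thesis by simp
  qed
  have uU: "us i t \<in> ?U" for i t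
  proof (cases "i = 0")
    case True then show ?thesis using traj0_U by simp
  next
    case False
    hence "lmpc_feasible A B ?X ?U N xs i (xs i t) (opt i t)" and e: "us i t = opt i t 0"
      using opt[of i t] unfolding lmpc_optimal_def by simp_all
    hence "opt i t 0 \<in> ?U" using N0 unfolding lmpc_feasible_def by blast
    then show ?thesis using e by simp
  qed
  define Jc where "Jc i t = lmpc_cost A B Q R N xs us i (xs i t) (opt i t)" for i t
  have ctgJ: "cost_to_go Q R xs us i t \<le> Jc i t"
    if i1: "i \<ge> 1" and fin: "\<And>i'. i' \<le> i - 1 \<Longrightarrow> iter_cost Q R xs us i' < top" for i t
  proof -
    obtain K where K: "\<forall>i'\<le>i - 1. \<forall>t. norm (us i' t) \<le> K" using us_bound[OF Qpsd Rpd fin] by blast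
    have step: "Jc i (Suc t) + ennreal (stage_cost Q R (xs i t) (us i t)) \<le> Jc i t" for t
    proof -
      have ov: "lmpc_optimal A B ?X ?U Q R N xs us i (xs i t) (opt i t)" and e: "us i t = opt i t 0"
        using opt[OF i1, of t] by auto
      have ow: "lmpc_optimal A B ?X ?U Q R N xs us i (A *v xs i t + B *v opt i t 0) (opt i (Suc t))"
        using opt[OF i1, of "Suc t"] dyn[of i t] e by simp
      have d: "lmpc_cost A B Q R N xs us i (A *v xs i t + B *v opt i t 0) (opt i (Suc t))
          + ennreal (stage_cost Q R (xs i t) (opt i t 0)) \<le> lmpc_cost A B Q R N xs us i (xs i t) (opt i t)"
        by (rule decrease[OF Qpsd Rpd cX cU N1 _ _ _ _ ov ow, where K=K]) (use dyn xX uU K in blast)+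
      have x1: "xs i (Suc t) = A *v xs i t + B *v opt i t 0" using dyn[of i t] e by simp
      show ?thesis unfolding Jc_def x1 e using d .
    qed
    have "(\<Sum>l. ennreal (stage_cost Q R (xs i (l + t)) (us i (l + t)))) \<le> Jc i t"
      by (rule telescope[of "Jc i" "\<lambda>t. stage_cost Q R (xs i t) (us i t)"]) (rule step)
    then show ?thesis unfolding cost_to_go_def .
  qed
  have Jcand: "Jc i t \<le> cost_to_go Q R xs us p t"
    and Jfeas: "lmpc_feasible A B ?X ?U N xs i (xs i t) (\<lambda>k. us p (t + k))"
    if i1: "i \<ge> 1" and p: "p \<le> i - 1" and xe: "xs p t = xs i t" for i t p
  proof -
    have tc: "lmpc_feasible A B ?X ?U N xs i (xs p t) (\<lambda>k. us p (t + k))"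
      "lmpc_cost A B Q R N xs us i (xs p t) (\<lambda>k. us p (t + k)) \<le> cost_to_go Q R xs us p t"
      using traj_candidate[OF Qpsd Rpd p, where A=A and B=B and X="?X" and U="?U" and N=N and t=t and xs=xs and us=us] dyn xX uU by auto
    show "lmpc_feasible A B ?X ?U N xs i (xs i t) (\<lambda>k. us p (t + k))" using tc(1) xe by simp
    have "Jc i t \<le> lmpc_cost A B Q R N xs us i (xs p t) (\<lambda>k. us p (t + k))"
      using opt[OF i1, of t] tc(1) xe unfolding Jc_def lmpc_optimal_def by simp
    then show "Jc i t \<le> cost_to_go Q R xs us p t" using tc(2) by (rule order.trans)
  qed
  have fin: "iter_cost Q R xs us i < top" for i
  proof (induction i rule: less_induct)
    case (less i)
    show ?case
    proof (cases "i = 0")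
      case True
      have "iter_cost Q R xs us 0 = ennreal (\<Sum>t. stage_cost Q R (xs 0 t) (us 0 t))"
        unfolding iter_cost_def using stage_cost_nonneg[OF Qpsd Rpd] traj0_cost
        by (intro suminf_ennreal2) auto
      then show ?thesis using True by simp
    next
      case False
      hence i1: "i \<ge> 1" by simp
      have "iter_cost Q R xs us i = cost_to_go Q R xs us i 0" by (rule iter_ctg)
      also have "\<dots> \<le> Jc i 0" by (rule ctgJ[OF i1]) (use less False in auto)
      also have "\<dots> \<le> cost_to_go Q R xs us (i - 1) 0" by (rule Jcand[OF i1]) (auto simp: init)
      also have "\<dots> = iter_cost Q R xs us (i - 1)" by (rule iter_ctg[symmetric])
      also have "\<dots> < top" using less False by simp
      finally show ?thesis .
    qed
  qed
  define m where "m = j - 1"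
  have jm: "j = Suc m" using j1 unfolding m_def by simp
  have xeq: "\<forall>s\<le>t. xs j s = xs m s" if "\<forall>s<t. us j s = us m s" for t
  proof (intro allI impI)
    fix s assume "s \<le> t"
    then show "xs j s = xs m s"
    proof (induction s)
      case 0 then show ?case by (simp add: init)
    next
      case (Suc s) then show ?case using that dyn[of j s] dyn[of m s] by simp
    qed
  qed
  have key: "\<forall>s<t. us j s = us m s" for t
  proof (induction t)
    case 0 then show ?case by simp
  next
    case (Suc t)
    have xe: "xs m t = xs j t" using xeq[OF Suc.IH] by simp
    have j1': "j \<ge> 1" by (rule j1)
    have mj: "m \<le> j - 1" unfolding m_def by simp
    let ?v = "opt j t" and ?w = "\<lambda>k. us m (t + k)"
    have ov: "lmpc_optimal A B ?X ?U Q R N xs us j (xs j t) ?v" and e: "us j t = ?v 0"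
      using opt[OF j1] by auto
    have fw: "lmpc_feasible A B ?X ?U N xs j (xs j t) ?w" by (rule Jfeas[OF j1 mj xe])
    have cw: "lmpc_cost A B Q R N xs us j (xs j t) ?w \<le> cost_to_go Q R xs us m t"
      using traj_candidate[OF Qpsd Rpd mj, where A=A and B=B and X="?X" and U="?U" and N=N and t=t and xs=xs and us=us] dyn xX uU xe by auto
    have cvw: "Jc j t \<le> lmpc_cost A B Q R N xs us j (xs j t) ?w"
      using ov fw unfolding Jc_def lmpc_optimal_def by blast
    have finj: "\<And>i'. i' \<le> j - 1 \<Longrightarrow> iter_cost Q R xs us i' < top" using fin by blast
    have cj: "cost_to_go Q R xs us j t \<le> Jc j t" by (rule ctgJ[OF j1 finj])
    have ceq: "cost_to_go Q R xs us m t = cost_to_go Q R xs us j t"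
    proof -
      let ?Sm = "\<Sum>k<t. ennreal (stage_cost Q R (xs m (0 + k)) (us m (0 + k)))"
      let ?Sj = "\<Sum>k<t. ennreal (stage_cost Q R (xs j (0 + k)) (us j (0 + k)))"
      have "?Sm = ?Sj" using Suc.IH xeq[OF Suc.IH] by (intro sum.cong) auto
      moreover have "?Sm \<noteq> top"
      proof -
        have "?Sm = ennreal (\<Sum>k<t. stage_cost Q R (xs m (0 + k)) (us m (0 + k)))"
          by (rule sum_ennreal) (rule stage_cost_nonneg[OF Qpsd Rpd])
        then show ?thesis by simp
      qed
      moreover have "iter_cost Q R xs us m = ?Sm + cost_to_go Q R xs us m t"
        unfolding iter_ctg using ctg_iter[of Q R xs us m 0 t] by simp
      moreover have "iter_cost Q R xs us j = ?Sj + cost_to_go Q R xs us j t"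
        unfolding iter_ctg using ctg_iter[of Q R xs us j 0 t] by simp
      ultimately have "?Sm + cost_to_go Q R xs us m t = ?Sm + cost_to_go Q R xs us j t"
        and "?Sm \<noteq> top" using same_cost unfolding m_def[symmetric] by simp_all
      then show ?thesis using ennreal_add_left_cancel[of ?Sm] by (simp add: infinity_ennreal_def)
    qed
    have a: "lmpc_cost A B Q R N xs us j (xs j t) ?v \<le> lmpc_cost A B Q R N xs us j (xs j t) ?w"
      using cvw unfolding Jc_def .
    have "lmpc_cost A B Q R N xs us j (xs j t) ?w \<le> cost_to_go Q R xs us j t" using cw unfolding ceq .
    also have "\<dots> \<le> lmpc_cost A B Q R N xs us j (xs j t) ?v" using cj unfolding Jc_def .
    finally have eqc: "lmpc_cost A B Q R N xs us j (xs j t) ?v = lmpc_cost A B Q R N xs us j (xs j t) ?w"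
      using a by (rule order.antisym[rotated])
    have ctop: "cost_to_go Q R xs us m t < top"
    proof -
      have "cost_to_go Q R xs us m t \<le> iter_cost Q R xs us m"
        unfolding iter_ctg using ctg_iter[of Q R xs us m 0 t] by (simp add: le_iff_add add.commute)
      then show ?thesis using fin[of m] by (rule le_less_trans)
    qed
    have "lmpc_cost A B Q R N xs us j (xs j t) ?w < top" using cw ctop by (rule le_less_trans)
    hence vfin: "lmpc_cost A B Q R N xs us j (xs j t) ?v < top" unfolding eqc .
    have fv: "lmpc_feasible A B ?X ?U N xs j (xs j t) ?v" using ov unfolding lmpc_optimal_def by blast
    have "?v 0 = ?w 0"
      by (rule lmpc_unique[OF Qpsd Rpd cX(2) cU(2) N1 fv fw _ eqc vfin])
         (use ov in \<open>auto simp: lmpc_optimal_def\<close>)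
    hence "us j t = us m t" using e by simp
    then show ?case using Suc.IH less_Suc_eq by auto
  qed
  have "xs m = xs j"
  proof
    fix s show "xs m s = xs j s" using xeq[OF key[of s]] by simp
  qed
  then show ?thesis unfolding m_def .
qed

end
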